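(* For every integer $m>1$ and positive integers $w,d$ there is a number $\gamma=f(m,w,d)$ such that the following holds. Let $G$ be a connected graph with $\Delta(G)\leq d$, let $(T,\mathcal{Y})$ be a lean tree-decomposition of $G$ of width at most $w$, let $P$ be a path in $T$, and let $t_1,\ldots,t_{\gamma'}$ with $\gamma'\geq\gamma$ be interior vertices of $P$ occurring along $P$ in this order, such that for some positive integer $s$, $|Y_{t_i}|=s$ for all $i$ and $|Y_t|\ge s$ for all $t$ on $P$ between $t_1$ and $t_{\gamma'}$, and $Y_{t_i}\cap Y_{t_j}=U$ for all distinct $i,j$, for a fixed set $U\subseteq V(G)$. Then there is an integer $k\geq 0$ with $k+m\leq\gamma'$ such that $N(U)\cap\big(Y_P[t_{k+1},t_{k+m})\setminus U\big)=\emptyset$.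
   Context: All graphs are finite and loopless but may have parallel edges. A tree-decomposition of $G$ is a pair $(T,\mathcal{Y})$ where $T$ is a tree and $\mathcal{Y}=\{Y_t\}_{t\in V(T)}$ is a family of subsets of $V(G)$ (bags) such that (W1) $\bigcup_{t} Y_t=V(G)$ and every edge of $G$ has both ends in some $Y_t$; and (W2) if $t'$ lies on the path of $T$ between $t$ and $t''$ then $Y_t\cap Y_{t''}\subseteq Y_{t'}$. Its width is $\max_t(|Y_t|-1)$. It is lean if additionally: (W3) for every two vertices $t,t'$ of $T$ and every positive integer $k$, either $G$ has $k$ vertex-disjoint paths between $Y_t$ and $Y_{t'}$, or some vertex $t''$ on the path of $T$ between $t$ and $t'$ has $|Y_{t''}|<k$; (W4) distinct vertices $t\ne t'$ of $T$ have $Y_t\neq Y_{t'}$; (W5) if $t_0\in V(T)$ and $B$ is a component of $T-t_0$, then $\bigcup_{t\in V(B)}Y_t\setminus Y_{t_0}\neq\emptyset$. For vertices $t',t''$ of the path $P$, $P[t',t'']$ is the subpath of $P$ between them, and $Y_P[t',t'')$ is the union of all bags $Y_t$ such that either $t\in V(P[t',t''])$, or $t\in V(T)\setminus V(P)$ and the unique path in $T$ from $t$ to $P$ ends at a vertex of $P[t',t'']-t''$. For $X\subseteq V(G)$, $N(X)$ is the set of vertices not in $X$ adjacent to some vertex of $X$. *)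

theory Defs
  imports Main
begin

definition is_path :: "'a set \<Rightarrow> ('a \<Rightarrow> 'a \<Rightarrow> bool) \<Rightarrow> 'a list \<Rightarrow> bool" where
  "is_path V adj xs \<longleftrightarrow> xs \<noteq> [] \<and> distinct xs \<and> set xs \<subseteq> V \<and>
     (\<forall>i. Suc i < length xs \<longrightarrow> adj (xs ! i) (xs ! Suc i))"

definition path_betw :: "'a set \<Rightarrow> ('a \<Rightarrow> 'a \<Rightarrow> bool) \<Rightarrow> 'a list \<Rightarrow> 'a \<Rightarrow> 'a \<Rightarrow> bool" where
  "path_betw V adj xs a b \<longleftrightarrow> is_path V adj xs \<and> hd xs = a \<and> last xs = b"

definition connected_graph :: "'a set \<Rightarrow> ('a \<Rightarrow> 'a \<Rightarrow> bool) \<Rightarrow> bool" where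
  "connected_graph V adj \<longleftrightarrow> V \<noteq> {} \<and> (\<forall>a\<in>V. \<forall>b\<in>V. \<exists>xs. path_betw V adj xs a b)"

definition is_component :: "'a set \<Rightarrow> ('a \<Rightarrow> 'a \<Rightarrow> bool) \<Rightarrow> 'a set \<Rightarrow> bool" where
  "is_component W adj B \<longleftrightarrow> (\<exists>b\<in>W. B = {x. \<exists>p. path_betw W adj p b x})"

section \<open>Finite loopless multigraphs: vertices V, edges E, ends e = set of the two ends\<close>

definition multigraph :: "'v set \<Rightarrow> 'e set \<Rightarrow> ('e \<Rightarrow> 'v set) \<Rightarrow> bool" where
  "multigraph V E ends \<longleftrightarrow> finite V \<and> finite E \<and> (\<forall>e\<in>E. ends e \<subseteq> V \<and> card (ends e) = 2)"

definition gadj :: "'e set \<Rightarrow> ('e \<Rightarrow> 'v set) \<Rightarrow> 'v \<Rightarrow> 'v \<Rightarrow> bool" where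
  "gadj E ends u v \<longleftrightarrow> (\<exists>e\<in>E. ends e = {u, v})"

text \<open>Degree (parallel edges counted with multiplicity).\<close>
definition degree :: "'e set \<Rightarrow> ('e \<Rightarrow> 'v set) \<Rightarrow> 'v \<Rightarrow> nat" where
  "degree E ends v = card {e\<in>E. v \<in> ends e}"

definition nbhd :: "'v set \<Rightarrow> 'e set \<Rightarrow> ('e \<Rightarrow> 'v set) \<Rightarrow> 'v set \<Rightarrow> 'v set" where
  "nbhd V E ends X = {v \<in> V - X. \<exists>u\<in>X. gadj E ends u v}"

definition has_disj_paths :: "'v set \<Rightarrow> ('v \<Rightarrow> 'v \<Rightarrow> bool) \<Rightarrow> nat \<Rightarrow> 'v set \<Rightarrow> 'v set \<Rightarrow> bool" where
  "has_disj_paths V adj k A B \<longleftrightarrow> (\<exists>ps :: nat \<Rightarrow> 'v list.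
     (\<forall>i<k. \<exists>a\<in>A. \<exists>b\<in>B. path_betw V adj (ps i) a b) \<and>
     (\<forall>i<k. \<forall>j<k. i \<noteq> j \<longrightarrow> set (ps i) \<inter> set (ps j) = {}))"

definition is_tree :: "'t set \<Rightarrow> ('t \<Rightarrow> 't \<Rightarrow> bool) \<Rightarrow> bool" where
  "is_tree VT adjT \<longleftrightarrow> finite VT \<and>
     (\<forall>x y. adjT x y \<longrightarrow> x \<in> VT \<and> y \<in> VT \<and> x \<noteq> y \<and> adjT y x) \<and>
     connected_graph VT adjT \<and>
     \<not> (\<exists>c. is_path VT adjT c \<and> 3 \<le> length c \<and> adjT (last c) (hd c))"

definition tree_decomp :: "'v set \<Rightarrow> 'e set \<Rightarrow> ('e \<Rightarrow> 'v set) \<Rightarrow> 't set \<Rightarrow> ('t \<Rightarrow> 't \<Rightarrow> bool) \<Rightarrow> ('t \<Rightarrow> 'v set) \<Rightarrow> bool" where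
  "tree_decomp V E ends VT adjT Y \<longleftrightarrow> is_tree VT adjT \<and>
     (\<forall>t\<in>VT. Y t \<subseteq> V) \<and>
     (\<Union>t\<in>VT. Y t) = V \<and>
     (\<forall>e\<in>E. \<exists>t\<in>VT. ends e \<subseteq> Y t) \<and>
     (\<forall>t t' t'' p. path_betw VT adjT p t t'' \<and> t' \<in> set p \<longrightarrow> Y t \<inter> Y t'' \<subseteq> Y t')"

definition lean_tree_decomp :: "'v set \<Rightarrow> 'e set \<Rightarrow> ('e \<Rightarrow> 'v set) \<Rightarrow> 't set \<Rightarrow> ('t \<Rightarrow> 't \<Rightarrow> bool) \<Rightarrow> ('t \<Rightarrow> 'v set) \<Rightarrow> bool" where
  "lean_tree_decomp V E ends VT adjT Y \<longleftrightarrow> tree_decomp V E ends VT adjT Y \<and>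
     \<comment> \<open>(W3)\<close>
     (\<forall>t\<in>VT. \<forall>t'\<in>VT. \<forall>k::nat. 0 < k \<longrightarrow>
        has_disj_paths V (gadj E ends) k (Y t) (Y t') \<or>
        (\<exists>p. path_betw VT adjT p t t' \<and> (\<exists>t''\<in>set p. card (Y t'') < k))) \<and>
     \<comment> \<open>(W4)\<close>
     inj_on Y VT \<and>
     \<comment> \<open>(W5)\<close>
     (\<forall>t0\<in>VT. \<forall>B. is_component (VT - {t0}) adjT B \<longrightarrow> (\<Union>t\<in>B. Y t) - Y t0 \<noteq> {})"

text \<open>Y_P[P!a, P!b) for a path P (a list) in T and indices a \<le> b.\<close>
definition YP :: "'t set \<Rightarrow> ('t \<Rightarrow> 't \<Rightarrow> bool) \<Rightarrow> ('t \<Rightarrow> 'v set) \<Rightarrow> 't list \<Rightarrow> nat \<Rightarrow> nat \<Rightarrow> 'v set" where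
  "YP VT adjT Y P a b = (\<Union>j\<in>{a..b}. Y (P ! j)) \<union>
     (\<Union>t\<in>{t. t \<in> VT \<and> t \<notin> set P \<and>
        (\<exists>q j. a \<le> j \<and> j < b \<and> path_betw VT adjT q t (P ! j) \<and> set (butlast q) \<inter> set P = {})}. Y t)"

end

theory Submission
  imports Defs
begin

definition walk :: "'a set \<Rightarrow> ('a \<Rightarrow> 'a \<Rightarrow> bool) \<Rightarrow> 'a list \<Rightarrow> bool" where
  "walk V adj xs \<longleftrightarrow> xs \<noteq> [] \<and> set xs \<subseteq> V \<and>
     (\<forall>i. Suc i < length xs \<longrightarrow> xs ! i = xs ! Suc i \<or> adj (xs ! i) (xs ! Suc i))"

lemma walk_single[simp]: "walk V adj [x] \<longleftrightarrow> x \<in> V"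
  by (auto simp: walk_def)

lemma walk_Cons2: "walk V adj (x # y # xs) \<longleftrightarrow> x \<in> V \<and> (x = y \<or> adj x y) \<and> walk V adj (y # xs)"
proof
  assume "walk V adj (x # y # xs)"
  then show "x \<in> V \<and> (x = y \<or> adj x y) \<and> walk V adj (y # xs)"
    unfolding walk_def by auto
next
  assume a: "x \<in> V \<and> (x = y \<or> adj x y) \<and> walk V adj (y # xs)"
  show "walk V adj (x # y # xs)" unfolding walk_def
  proof (intro conjI allI impI)
    fix i assume "Suc i < length (x # y # xs)"
    then show "(x # y # xs) ! i = (x # y # xs) ! Suc i \<or> adj ((x # y # xs) ! i) ((x # y # xs) ! Suc i)"
      using a unfolding walk_def by (cases i) auto
  qed (use a in \<open>auto simp: walk_def\<close>)
qed

lemma path_single[simp]: "is_path V adj [x] \<longleftrightarrow> x \<in> V"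
  by (auto simp: is_path_def)

lemma path_Cons2: "is_path V adj (x # y # xs) \<longleftrightarrow> x \<in> V \<and> x \<notin> set (y # xs) \<and> adj x y \<and> is_path V adj (y # xs)"
proof
  assume "is_path V adj (x # y # xs)"
  then show "x \<in> V \<and> x \<notin> set (y # xs) \<and> adj x y \<and> is_path V adj (y # xs)"
    unfolding is_path_def by auto
next
  assume a: "x \<in> V \<and> x \<notin> set (y # xs) \<and> adj x y \<and> is_path V adj (y # xs)"
  show "is_path V adj (x # y # xs)" unfolding is_path_def
  proof (intro conjI allI impI)
    fix i assume "Suc i < length (x # y # xs)"
    then show "adj ((x # y # xs) ! i) ((x # y # xs) ! Suc i)"
      using a unfolding is_path_def by (cases i) auto
  qed (use a in \<open>auto simp: is_path_def\<close>)
qed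

lemma path_walk: "is_path V adj xs \<Longrightarrow> walk V adj xs"
  by (auto simp: is_path_def walk_def)

lemma walk_append:
  "walk V adj xs \<Longrightarrow> walk V adj ys \<Longrightarrow> (last xs = hd ys \<or> adj (last xs) (hd ys)) \<Longrightarrow> walk V adj (xs @ ys)"
proof (induction xs rule: induct_list012)
  case 1 then show ?case by (simp add: walk_def)
next
  case (2 x) then show ?case by (cases ys) (auto simp: walk_Cons2)
next
  case (3 x y zs) then show ?case by (auto simp: walk_Cons2)
qed

lemma walk_rev:
  assumes sym: "\<And>x y. adj x y \<Longrightarrow> adj y x"
  shows "walk V adj xs \<Longrightarrow> walk V adj (rev xs)"
proof (induction xs rule: induct_list012)
  case 1 then show ?case by (simp add: walk_def)
next
  case (2 x) then show ?case by simp
next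
  case (3 x y zs)
  have "walk V adj (rev (y # zs) @ [x])"
    by (rule walk_append) (use 3 sym in \<open>auto simp: walk_Cons2\<close>)
  then show ?case by simp
qed

lemma path_suffix: "is_path V adj (p1 @ p2) \<Longrightarrow> p2 \<noteq> [] \<Longrightarrow> is_path V adj p2"
proof (induction p1)
  case Nil then show ?case by simp
next
  case (Cons a p1)
  then show ?case by (cases "p1 @ p2") (auto simp: path_Cons2)
qed

lemma walk_to_path:
  "walk V adj xs \<Longrightarrow> \<exists>p. path_betw V adj p (hd xs) (last xs) \<and> set p \<subseteq> set xs"
proof (induction xs rule: induct_list012)
  case 1 then show ?case by (simp add: walk_def)
next
  case (2 x) then show ?case by (intro exI[of _ "[x]"]) (auto simp: path_betw_def)
next
  case (3 x y zs)
  then have w: "walk V adj (y # zs)" and x: "x \<in> V" "x = y \<or> adj x y" by (auto simp: walk_Cons2)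
  from 3(2)[OF w] have "\<exists>p. path_betw V adj p y (last (y # zs)) \<and> set p \<subseteq> set (y # zs)" by simp
  then obtain p where p: "path_betw V adj p y (last (y # zs))" "set p \<subseteq> set (y # zs)" by blast
  show ?case
  proof (cases "x \<in> set p")
    case True
    then obtain p1 p2 where pp: "p = p1 @ x # p2" by (meson split_list)
    have "is_path V adj (x # p2)" using p pp path_suffix unfolding path_betw_def by blast
    moreover have "last (x # p2) = last p" using pp by simp
    ultimately show ?thesis using p pp
      by (intro exI[of _ "x # p2"]) (auto simp: path_betw_def)
  next
    case False
    obtain r where pr: "p = y # r" using p unfolding path_betw_def is_path_def
      by (cases p) auto
    have "x \<noteq> y" using False pr by auto
    then have "adj x y" using x by auto
    then have "is_path V adj (x # p)" using p pr False x
      by (auto simp: path_Cons2 path_betw_def)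
    then show ?thesis using p pr
      by (intro exI[of _ "x # p"]) (auto simp: path_betw_def)
  qed
qed

lemma path_hd_last_single:
  assumes "is_path V adj p" "hd p = last p" shows "p = [hd p]"
proof (cases p)
  case Nil then show ?thesis using assms by (simp add: is_path_def)
next
  case (Cons a r)
  show ?thesis
  proof (cases r)
    case Nil then show ?thesis using Cons by simp
  next
    case (Cons b r')
    have "last p \<in> set r" using \<open>p = a # r\<close> Cons by simp
    moreover have "a \<notin> set r" using assms(1) \<open>p = a # r\<close> by (simp add: is_path_def)
    ultimately show ?thesis using assms(2) \<open>p = a # r\<close> by simp
  qed
qed

lemma tree_path_unique:
  assumes tree: "is_tree VT adj"
  shows "path_betw VT adj p a b \<Longrightarrow> path_betw VT adj p' a b \<Longrightarrow> p = p'"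
proof (induction p arbitrary: a p')
  case Nil then show ?case by (simp add: path_betw_def is_path_def)
next
  case (Cons a0 r)
  have a0: "a0 = a" using Cons.prems by (simp add: path_betw_def)
  obtain r' where p': "p' = a # r'" using Cons.prems
    by (cases p') (auto simp: path_betw_def is_path_def)
  show ?case
  proof (cases r)
    case Nil
    then have "a = b" using Cons.prems a0 by (simp add: path_betw_def)
    then have "p' = [hd p']" using Cons.prems path_hd_last_single unfolding path_betw_def by metis
    then show ?thesis using Nil a0 p' by simp
  next
    case (Cons x r1)
    show ?thesis
    proof (cases r')
      case Nil
      then have "a = b" using Cons.prems p' by (simp add: path_betw_def)
      then have "a0 # r = [hd (a0 # r)]" using Cons.prems path_hd_last_single a0 unfolding path_betw_def by metis
      then show ?thesis using Cons by simp
    next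
      case (Cons y r1')
      have P1: "is_path VT adj (a # x # r1)" using \<open>path_betw VT adj (a0 # r) a b\<close> a0 \<open>r = x # r1\<close>
        by (simp add: path_betw_def)
      have P2: "is_path VT adj (a # y # r1')" using \<open>path_betw VT adj p' a b\<close> p' Cons
        by (simp add: path_betw_def)
      have l1: "last (x # r1) = b" using \<open>path_betw VT adj (a0 # r) a b\<close> \<open>r = x # r1\<close> by (simp add: path_betw_def)
      have l2: "last (y # r1') = b" using \<open>path_betw VT adj p' a b\<close> p' Cons by (simp add: path_betw_def)
      show ?thesis
      proof (cases "x = y")
        case True
        have "r = r'"
          using Cons.IH[of x r'] P1 P2 l1 l2 \<open>r = x # r1\<close> Cons True
          by (simp add: path_betw_def path_Cons2)
        then show ?thesis using a0 p' by simp
      next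
        case False
        have sym: "\<And>u v. adj u v \<Longrightarrow> adj v u" using tree by (simp add: is_tree_def)
        have w1: "walk VT adj (x # r1)" using P1 by (simp add: path_Cons2 path_walk)
        have "walk VT adj (y # r1')" using P2 by (simp add: path_Cons2 path_walk)
        then have w2: "walk VT adj (rev (y # r1'))" using walk_rev[of adj, OF sym] by blast
        have "walk VT adj ((x # r1) @ rev (y # r1'))"
          by (rule walk_append[OF w1 w2]) (use l1 l2 in \<open>simp only: hd_rev last.simps, auto\<close>)
        from walk_to_path[OF this] obtain c where
          c: "path_betw VT adj c x y" "set c \<subseteq> set (x # r1) \<union> set (y # r1')"
          by (auto simp: last_rev)
        have an: "a \<notin> set c" using c(2) P1 P2 by (auto simp: path_Cons2)
        obtain c' where cc: "c = x # c'" using c(1) by (cases c) (auto simp: path_betw_def is_path_def)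
        have "c' \<noteq> []" using cc c(1) False by (auto simp: path_betw_def)
        then have cyc: "is_path VT adj (a # c)" "3 \<le> length (a # c)"
          using c(1) cc an P1 by (auto simp: path_betw_def path_Cons2 Suc_le_eq)
        have "adj y a" using P2 sym by (simp add: path_Cons2)
        then have "adj (last (a # c)) (hd (a # c))" using c(1) cc by (simp add: path_betw_def)
        then show ?thesis using cyc tree unfolding is_tree_def by blast
      qed
    qed
  qed
qed

lemma tree_cut:
  assumes tree: "is_tree VT adj" and p: "path_betw VT adj p a b" and cp: "c \<in> set p"
    and w: "walk VT adj w" "hd w = a" "last w = b"
  shows "c \<in> set w"
proof -
  obtain p' where "path_betw VT adj p' a b" "set p' \<subseteq> set w" using walk_to_path[OF w(1)] w by auto
  then show ?thesis using tree_path_unique[OF tree p] cp by auto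
qed

lemma seg_path:
  assumes "is_path V adj P" "j \<le> j'" "j' < length P"
  shows "path_betw V adj (take (j' - j + 1) (drop j P)) (P ! j) (P ! j')"
proof -
  let ?s = "take (j' - j + 1) (drop j P)"
  have len: "length ?s = j' - j + 1" using assms by simp
  have nth: "\<And>n. n < length ?s \<Longrightarrow> ?s ! n = P ! (j + n)" using assms by simp
  have "is_path V adj ?s"
    unfolding is_path_def
  proof (intro conjI allI impI)
    show "?s \<noteq> []" using len by auto
    show "distinct ?s" using assms by (simp add: is_path_def)
    show "set ?s \<subseteq> V" using assms(1) unfolding is_path_def
      by (meson in_set_dropD in_set_takeD subset_iff)
    fix i assume "Suc i < length ?s"
    then show "adj (?s ! i) (?s ! Suc i)" using nth[of i] nth[of "Suc i"] assms len
      unfolding is_path_def by auto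
  qed
  moreover have "hd ?s = P ! j" using assms by (simp add: hd_drop_conv_nth hd_take)
  moreover have "last ?s = P ! j'" using len nth[of "j' - j"] assms
    by (simp add: last_conv_nth)
  ultimately show ?thesis by (simp add: path_betw_def)
qed

lemma seg_mem:
  assumes "j \<le> i" "i \<le> j'" "j' < length P"
  shows "P ! i \<in> set (take (j' - j + 1) (drop j P))"
proof -
  have "take (j' - j + 1) (drop j P) ! (i - j) = P ! i" using assms by simp
  moreover have "i - j < length (take (j' - j + 1) (drop j P))" using assms by simp
  ultimately show ?thesis by (metis nth_mem)
qed

lemma set_walk_end:
  assumes "q \<noteq> []" "set (butlast q) \<inter> set P = {}" "last q = P ! j" "x \<in> set q" "x \<in> set P"
  shows "x = P ! j"
proof -
  have "set q = set (butlast q) \<union> {last q}" using assms(1)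
    by (metis append_butlast_last_id set_append empty_set list.simps(15) Un_empty_left insert_is_Un)
  then show ?thesis using assms by auto
qed

lemma sep:
  assumes tree: "is_tree VT adjT"
    and W2: "\<forall>t t' t'' p. path_betw VT adjT p t t'' \<and> t' \<in> set p \<longrightarrow> Y t \<inter> Y t'' \<subseteq> Y t'"
    and P: "is_path VT adjT P"
    and q: "walk VT adjT q" "hd q = t" "last q = P ! j" "set (butlast q) \<inter> set P = {}"
    and q': "walk VT adjT q'" "hd q' = t'" "last q' = P ! j'" "set (butlast q') \<inter> set P = {}"
    and ij: "j < i" "i < j'" "j' < length P"
    and v: "v \<in> Y t" "v \<in> Y t'"
  shows "v \<in> Y (P ! i)"
proof -
  have sym: "\<And>u v. adjT u v \<Longrightarrow> adjT v u" using tree by (simp add: is_tree_def)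
  let ?s = "take (j' - j + 1) (drop j P)"
  have s: "path_betw VT adjT ?s (P ! j) (P ! j')" using seg_path[OF P] ij by simp
  have si: "P ! i \<in> set ?s" using seg_mem[of j i j' P] ij by simp
  have ne: "q \<noteq> []" "q' \<noteq> []" using q q' by (auto simp: walk_def)
  have ws: "walk VT adjT ?s" using s by (simp add: path_betw_def path_walk)
  have hs: "hd ?s = P ! j" "last ?s = P ! j'" using s by (auto simp: path_betw_def)
  have sne: "?s \<noteq> []" using s by (auto simp: path_betw_def is_path_def)
  have wq'r: "walk VT adjT (rev q')" using walk_rev[of adjT, OF sym] q' by blast
  have "walk VT adjT (?s @ rev q')"
    by (rule walk_append[OF ws wq'r]) (use hs q' ne in \<open>auto simp: hd_rev\<close>)
  then have W: "walk VT adjT (q @ (?s @ rev q'))"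
    by (rule walk_append[OF q(1)]) (use hs q sne in auto)
  have "hd (q @ (?s @ rev q')) = t" "last (q @ (?s @ rev q')) = t'"
    using q q' ne sne by (auto simp: last_rev)
  then obtain p0 where p0: "path_betw VT adjT p0 t t'"
    using walk_to_path[OF W] by auto
  have "P ! i \<in> set p0"
  proof (rule ccontr)
    assume nin: "P ! i \<notin> set p0"
    have wqr: "walk VT adjT (rev q)" using walk_rev[of adjT, OF sym] q by blast
    have wp0: "walk VT adjT p0" using p0 by (simp add: path_betw_def path_walk)
    have p0ne: "p0 \<noteq> []" using p0 by (auto simp: path_betw_def is_path_def)
    have "walk VT adjT (p0 @ q')"
      by (rule walk_append[OF wp0 q'(1)]) (use p0 q' in \<open>auto simp: path_betw_def\<close>)
    then have W2': "walk VT adjT (rev q @ (p0 @ q'))"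
      by (rule walk_append[OF wqr]) (use p0 q ne p0ne in \<open>auto simp: path_betw_def last_rev\<close>)
    have "hd (rev q @ (p0 @ q')) = P ! j" "last (rev q @ (p0 @ q')) = P ! j'"
      using q q' ne p0ne by (auto simp: hd_rev)
    from tree_cut[OF tree s si W2' this] nin have "P ! i \<in> set q \<or> P ! i \<in> set q'" by auto
    moreover have "P ! i \<in> set P" using ij by simp
    moreover have "P ! i \<noteq> P ! j" "P ! i \<noteq> P ! j'"
      using P ij by (auto simp: is_path_def nth_eq_iff_index_eq)
    ultimately show False using set_walk_end[OF ne(1) q(4) q(3)] set_walk_end[OF ne(2) q'(4) q'(3)]
      by blast
  qed
  then show ?thesis using W2 p0 v by blast
qed

lemma YP_mem:
  assumes "v \<in> YP VT adjT Y P a b" "b < length P" "is_path VT adjT P"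
  shows "\<exists>t q j. a \<le> j \<and> j \<le> b \<and> walk VT adjT q \<and> hd q = t \<and> last q = P ! j \<and>
           set (butlast q) \<inter> set P = {} \<and> v \<in> Y t"
  using assms(1) unfolding YP_def
proof (elim UnE)
  assume "v \<in> (\<Union>j\<in>{a..b}. Y (P ! j))"
  then obtain j where j: "j \<in> {a..b}" "v \<in> Y (P ! j)" by auto
  have "P ! j \<in> VT" using assms j by (auto simp: is_path_def)
  then show ?thesis using j by (intro exI[of _ "P ! j"] exI[of _ "[P ! j]"] exI[of _ j]) auto
next
  assume "v \<in> (\<Union>t\<in>{t. t \<in> VT \<and> t \<notin> set P \<and>
        (\<exists>q j. a \<le> j \<and> j < b \<and> path_betw VT adjT q t (P ! j) \<and> set (butlast q) \<inter> set P = {})}. Y t)"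
  then obtain t q j where "v \<in> Y t" "a \<le> j" "j < b" "path_betw VT adjT q t (P ! j)" "set (butlast q) \<inter> set P = {}"
    by blast
  then show ?thesis
    by (intro exI[of _ t] exI[of _ q] exI[of _ j]) (auto simp: path_betw_def path_walk)
qed

lemma nbhd_bound:
  assumes mg: "multigraph V E ends" and deg: "\<forall>v\<in>V. degree E ends v \<le> d"
    and UV: "U \<subseteq> V" and fU: "finite U"
  shows "card (nbhd V E ends U) \<le> 2 * d * card U"
proof -
  let ?S = "\<lambda>u. {e\<in>E. u \<in> ends e}"
  have fE: "finite E" using mg by (simp add: multigraph_def)
  have c2: "\<And>e. e \<in> E \<Longrightarrow> card (ends e) = 2" using mg by (simp add: multigraph_def)
  have fin: "\<And>e. e \<in> E \<Longrightarrow> finite (ends e)" using c2 by (metis card.infinite zero_neq_numeral)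
  have sub: "nbhd V E ends U \<subseteq> (\<Union>u\<in>U. \<Union>e\<in>?S u. ends e)"
    unfolding nbhd_def gadj_def by force
  have finS: "\<And>u. finite (?S u)" using fE by simp
  have finUN: "finite (\<Union>u\<in>U. \<Union>e\<in>?S u. ends e)" using fU finS fin by auto
  have "card (nbhd V E ends U) \<le> card (\<Union>u\<in>U. \<Union>e\<in>?S u. ends e)"
    by (rule card_mono[OF finUN sub])
  also have "\<dots> \<le> (\<Sum>u\<in>U. card (\<Union>e\<in>?S u. ends e))" by (rule card_UN_le[OF fU])
  also have "\<dots> \<le> (\<Sum>u\<in>U. 2 * d)"
  proof (rule sum_mono)
    fix u assume u: "u \<in> U"
    have "card (\<Union>e\<in>?S u. ends e) \<le> (\<Sum>e\<in>?S u. card (ends e))" by (rule card_UN_le[OF finS])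
    also have "\<dots> = (\<Sum>e\<in>?S u. 2)" using c2 by (intro sum.cong) auto
    also have "\<dots> = 2 * card (?S u)" by simp
    also have "card (?S u) \<le> d" using deg u UV by (auto simp: degree_def)
    finally show "card (\<Union>e\<in>?S u. ends e) \<le> 2 * d" by simp
  qed
  also have "\<dots> = 2 * d * card U" by simp
  finally show ?thesis .
qed

theorem lemma6p6:
  fixes m w d :: nat
  assumes "1 < m" and "0 < w" and "0 < d"
  shows "\<exists>\<gamma>::nat. \<forall>(V::nat set) (E::nat set) (ends::nat \<Rightarrow> nat set) (VT::nat set)
      (adjT::nat \<Rightarrow> nat \<Rightarrow> bool) (Y::nat \<Rightarrow> nat set) (P::nat list) (\<gamma>'::nat)
      (idx::nat \<Rightarrow> nat) (s::nat) (U::nat set).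
      multigraph V E ends \<and> connected_graph V (gadj E ends) \<and>
      (\<forall>v\<in>V. degree E ends v \<le> d) \<and>
      lean_tree_decomp V E ends VT adjT Y \<and> (\<forall>t\<in>VT. card (Y t) \<le> w + 1) \<and>
      is_path VT adjT P \<and>
      \<gamma> \<le> \<gamma>' \<and>
      (\<forall>i\<in>{1..\<gamma>'}. 0 < idx i \<and> idx i < length P - 1) \<and>
      (\<forall>i j. 1 \<le> i \<and> i < j \<and> j \<le> \<gamma>' \<longrightarrow> idx i < idx j) \<and>
      0 < s \<and>
      (\<forall>i\<in>{1..\<gamma>'}. card (Y (P ! idx i)) = s) \<and>
      (\<forall>j. idx 1 \<le> j \<and> j \<le> idx \<gamma>' \<longrightarrow> s \<le> card (Y (P ! j))) \<and>
      (\<forall>i\<in>{1..\<gamma>'}. \<forall>j\<in>{1..\<gamma>'}. i \<noteq> j \<longrightarrow> Y (P ! idx i) \<inter> Y (P ! idx j) = U)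
      \<longrightarrow> (\<exists>k. k + m \<le> \<gamma>' \<and>
             nbhd V E ends U \<inter> (YP VT adjT Y P (idx (k + 1)) (idx (k + m)) - U) = {})"
proof -
  define D where "D = 2 * d * (w + 1)"
  show ?thesis
  proof (rule exI[of _ "(D + 1) * (m + 2)"], intro allI impI)
    fix V :: "nat set" and E :: "nat set" and ends :: "nat \<Rightarrow> nat set" and VT :: "nat set"
      and adjT :: "nat \<Rightarrow> nat \<Rightarrow> bool" and Y :: "nat \<Rightarrow> nat set" and P :: "nat list" and \<gamma>' :: nat
      and idx :: "nat \<Rightarrow> nat" and s :: nat and U :: "nat set"
    assume H: "multigraph V E ends \<and> connected_graph V (gadj E ends) \<and>
      (\<forall>v\<in>V. degree E ends v \<le> d) \<and>
      lean_tree_decomp V E ends VT adjT Y \<and> (\<forall>t\<in>VT. card (Y t) \<le> w + 1) \<and>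
      is_path VT adjT P \<and>
      (D + 1) * (m + 2) \<le> \<gamma>' \<and>
      (\<forall>i\<in>{1..\<gamma>'}. 0 < idx i \<and> idx i < length P - 1) \<and>
      (\<forall>i j. 1 \<le> i \<and> i < j \<and> j \<le> \<gamma>' \<longrightarrow> idx i < idx j) \<and>
      0 < s \<and>
      (\<forall>i\<in>{1..\<gamma>'}. card (Y (P ! idx i)) = s) \<and>
      (\<forall>j. idx 1 \<le> j \<and> j \<le> idx \<gamma>' \<longrightarrow> s \<le> card (Y (P ! j))) \<and>
      (\<forall>i\<in>{1..\<gamma>'}. \<forall>j\<in>{1..\<gamma>'}. i \<noteq> j \<longrightarrow> Y (P ! idx i) \<inter> Y (P ! idx j) = U)"
    have mg: "multigraph V E ends" using H by blast
    have deg: "\<forall>v\<in>V. degree E ends v \<le> d" using H by blast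
    have td: "tree_decomp V E ends VT adjT Y" using H by (simp add: lean_tree_decomp_def)
    have tree: "is_tree VT adjT" using td by (simp add: tree_decomp_def)
    have YV: "\<forall>t\<in>VT. Y t \<subseteq> V" using td by (simp add: tree_decomp_def)
    have W2: "\<forall>t t' t'' p. path_betw VT adjT p t t'' \<and> t' \<in> set p \<longrightarrow> Y t \<inter> Y t'' \<subseteq> Y t'"
      using td by (simp add: tree_decomp_def)
    have wid: "\<forall>t\<in>VT. card (Y t) \<le> w + 1" using H by blast
    have P: "is_path VT adjT P" using H by blast
    have gam: "(D + 1) * (m + 2) \<le> \<gamma>'" using H by blast
    have idxr: "\<forall>i\<in>{1..\<gamma>'}. 0 < idx i \<and> idx i < length P - 1" using H by blast
    have mono: "\<forall>i j. 1 \<le> i \<and> i < j \<and> j \<le> \<gamma>' \<longrightarrow> idx i < idx j" using H by blast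
    have inter: "\<forall>i\<in>{1..\<gamma>'}. \<forall>j\<in>{1..\<gamma>'}. i \<noteq> j \<longrightarrow> Y (P ! idx i) \<inter> Y (P ! idx j) = U"
      using H by blast
    have fV: "finite V" using mg by (simp add: multigraph_def)
    have "(m + 2) \<le> (D + 1) * (m + 2)" by simp
    then have g2: "2 \<le> \<gamma>'" using gam by linarith
    have U: "U = Y (P ! idx 1) \<inter> Y (P ! idx 2)" using inter g2 by auto
    have "idx 1 < length P" using idxr g2 by force
    then have t1: "P ! idx 1 \<in> VT" using P by (auto simp: is_path_def)
    have UY: "U \<subseteq> Y (P ! idx 1)" using U by auto
    have Y1V: "Y (P ! idx 1) \<subseteq> V" using YV t1 by auto
    have fY1: "finite (Y (P ! idx 1))" using Y1V fV finite_subset by blast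
    have fU: "finite U" using UY fY1 finite_subset by blast
    have cU: "card U \<le> w + 1" using card_mono[OF fY1 UY] wid t1 by fastforce
    let ?N = "nbhd V E ends U"
    have "card ?N \<le> 2 * d * card U" using nbhd_bound[OF mg deg] UY Y1V fU by blast
    also have "\<dots> \<le> D" unfolding D_def using cU by (intro mult_left_mono) auto
    finally have cN: "card ?N \<le> D" .
    have fN: "finite ?N" using fV by (simp add: nbhd_def)
    show "\<exists>k. k + m \<le> \<gamma>' \<and> ?N \<inter> (YP VT adjT Y P (idx (k + 1)) (idx (k + m)) - U) = {}"
    proof (rule ccontr)
      assume nk: "\<not> ?thesis"
      have "\<forall>c\<in>{0..D}. \<exists>v. v \<in> ?N \<inter> (YP VT adjT Y P (idx (c * (m + 2) + 1)) (idx (c * (m + 2) + m)) - U)"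
      proof
        fix c assume c: "c \<in> {0..D}"
        have "c * (m + 2) \<le> D * (m + 2)" using c by (intro mult_right_mono) auto
        then have "c * (m + 2) + m \<le> D * (m + 2) + m" by simp
        also have "\<dots> \<le> \<gamma>'" using gam by simp
        finally show "\<exists>v. v \<in> ?N \<inter> (YP VT adjT Y P (idx (c * (m + 2) + 1)) (idx (c * (m + 2) + m)) - U)"
          using nk by blast
      qed
      then obtain g where g: "\<forall>c\<in>{0..D}. g c \<in> ?N \<inter> (YP VT adjT Y P (idx (c * (m + 2) + 1)) (idx (c * (m + 2) + m)) - U)"
        by metis
      have key: "g c \<noteq> g c'" if c: "c \<in> {0..D}" "c' \<in> {0..D}" "c < c'" for c c'
      proof
        assume eq: "g c = g c'"
        define k where "k = c * (m + 2)"
        define k' where "k' = c' * (m + 2)"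
        have kk: "k + m + 2 \<le> k'"
        proof -
          have "(c + 1) * (m + 2) \<le> c' * (m + 2)" using c by (intro mult_right_mono) auto
          then show ?thesis unfolding k_def k'_def by simp
        qed
        have k'g: "k' + m \<le> \<gamma>'"
        proof -
          have "c' * (m + 2) \<le> D * (m + 2)" using c by (intro mult_right_mono) auto
          then have "k' + m \<le> D * (m + 2) + m" unfolding k'_def by simp
          also have "\<dots> \<le> \<gamma>'" using gam by simp
          finally show ?thesis .
        qed
        have v1: "g c \<in> YP VT adjT Y P (idx (k + 1)) (idx (k + m))" "g c \<notin> U"
          using g c unfolding k_def by auto
        have v2: "g c \<in> YP VT adjT Y P (idx (k' + 1)) (idx (k' + m))"
          using g c eq unfolding k'_def by auto
        have "k + m \<in> {1..\<gamma>'}" using k'g kk \<open>1 < m\<close> by auto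
        then have b1: "idx (k + m) < length P" using idxr by fastforce
        have "k' + m \<in> {1..\<gamma>'}" using k'g kk \<open>1 < m\<close> by auto
        then have b2: "idx (k' + m) < length P" using idxr by fastforce
        obtain t q j1 where A: "j1 \<le> idx (k + m)" "walk VT adjT q" "hd q = t" "last q = P ! j1"
          "set (butlast q) \<inter> set P = {}" "g c \<in> Y t"
          using YP_mem[OF v1(1) b1 P] by blast
        obtain t' q' j2 where B: "idx (k' + 1) \<le> j2" "j2 \<le> idx (k' + m)" "walk VT adjT q'" "hd q' = t'"
          "last q' = P ! j2" "set (butlast q') \<inter> set P = {}" "g c \<in> Y t'"
          using YP_mem[OF v2 b2 P] by blast
        let ?i1 = "k + m + 1" and ?i2 = "k + m + 2"
        have o1: "idx (k + m) < idx ?i1" using mono kk k'g \<open>1 < m\<close> by simp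
        have o2: "idx ?i1 < idx ?i2" using mono kk k'g \<open>1 < m\<close> by simp
        have o3: "idx ?i2 < idx (k' + 1)" using mono kk k'g \<open>1 < m\<close> by simp
        have j2l: "j2 < length P" using B(2) b2 by simp
        have "g c \<in> Y (P ! idx ?i1)"
          by (rule sep[OF tree W2 P A(2-5) B(3-6)]) (use A B o1 o2 o3 j2l in auto)
        moreover have "g c \<in> Y (P ! idx ?i2)"
          by (rule sep[OF tree W2 P A(2-5) B(3-6)]) (use A B o1 o2 o3 j2l in auto)
        moreover have "Y (P ! idx ?i1) \<inter> Y (P ! idx ?i2) = U"
          using inter kk k'g by auto
        ultimately show False using v1(2) by blast
      qed
      have inj: "inj_on g {0..D}"
        unfolding inj_on_def
        by (metis key linorder_neqE_nat)
      have "g ` {0..D} \<subseteq> ?N" using g by auto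
      from card_inj_on_le[OF inj this fN] have "card {0..D} \<le> card ?N" .
      then show False using cN by simp
    qed
  qed
qed

end
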